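(* For any $f\in\mathcal{N}_2$, $\varepsilon>0$, and integer width $\omega>\frac{3R_2(f)^2}{\varepsilon^2}$, there exists a depth-two network $f_\phi\in\mathcal{N}_2$ with hidden width $\omega$ and parameters satisfying $\|\phi\|_\infty^2\le\|\phi\|_2^2\le4R_2(f)$ such that $\|f-f_\phi\|_{L^2}\le\varepsilon$.
   Context: $\mathcal{X}_d=\mathbb{S}^{d-1}\times\mathbb{S}^{d-1}\subset\mathbb{R}^{2d}$, $d\ge2$; $\|g\|_{L^2}^2=\mathbb{E}_{\mathbf{x}\sim\mathrm{Unif}(\mathcal{X}_d)}[g(\mathbf{x})^2]$. A depth-two ReLU network is $f_\phi(\mathbf{x})=\sum_{k=1}^{\omega_1}a_k[\mathbf{w}_k^\top\mathbf{x}+b_k]_++c$ with parameter vector $\phi=(\mathbf{W},\mathbf{b},\mathbf{a},c)$ and arbitrary finite width $\omega_1$; $\mathcal{N}_2$ is the set of such functions; $\|\phi\|_2^2$ is the sum of squares of all parameters, $\|\phi\|_\infty$ the maximum absolute parameter value; $R_2(f)=\inf\{\|\phi\|_2^2/2: f_\phi=f\text{ on }\mathcal{X}_d\}$. *)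

theory Defs
  imports "HOL-Probability.Probability"
begin

text \<open>Inputs live in R^(2d) = R^d x R^d; an input is a pair (x1,x2), and the inner
 product on the product type is the sum of the two inner products.\<close>

record 'n net =
  width :: nat
  wts   :: "nat \<Rightarrow> ((real^'n) \<times> (real^'n))"
  bias  :: "nat \<Rightarrow> real"
  outw  :: "nat \<Rightarrow> real"
  outb  :: real

definition relu :: "real \<Rightarrow> real" where
  "relu t = max 0 t"

definition net_fun :: "('n::finite) net \<Rightarrow> ((real^'n) \<times> (real^'n)) \<Rightarrow> real" where
  "net_fun \<phi> x = (\<Sum>k<width \<phi>. outw \<phi> k * relu (wts \<phi> k \<bullet> x + bias \<phi> k)) + outb \<phi>"

definition param_norm2 :: "('n::finite) net \<Rightarrow> real" where
  "param_norm2 \<phi> = (\<Sum>k<width \<phi>. (norm (wts \<phi> k))\<^sup>2 + (bias \<phi> k)\<^sup>2 + (outw \<phi> k)\<^sup>2) + (outb \<phi>)\<^sup>2"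

definition param_sup :: "('n::finite) net \<Rightarrow> real" where
  "param_sup \<phi> = Max (insert \<bar>outb \<phi>\<bar>
     (\<Union>k\<in>{..<width \<phi>}. {\<bar>bias \<phi> k\<bar>, \<bar>outw \<phi> k\<bar>}
        \<union> {\<bar>fst (wts \<phi> k) $ i\<bar> | i. True} \<union> {\<bar>snd (wts \<phi> k) $ i\<bar> | i. True}))"

definition X_d :: "((real^'n) \<times> (real^'n)) set" where
  "X_d = sphere 0 1 \<times> sphere 0 1"

definition N2 :: "(((real^'n) \<times> (real^'n)) \<Rightarrow> real) set" where
  "N2 = {f. \<exists>\<phi>. f = net_fun (\<phi>::('n::finite) net)}"

definition R2 :: "(((real^'n) \<times> (real^'n)) \<Rightarrow> real) \<Rightarrow> real" where
  "R2 f = Inf {param_norm2 \<phi> / 2 | \<phi>::('n::finite) net. \<forall>x\<in>X_d. net_fun \<phi> x = f x}"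

text \<open>Normalized uniform (surface) measure on the unit sphere S^(d-1), realised as the
 cone measure: push-forward of the uniform distribution on the unit ball under
 x \<mapsto> x/|x|.\<close>
definition sphere_unif :: "(real^'n::finite) measure" where
  "sphere_unif = distr (uniform_measure lborel (ball 0 1)) borel (\<lambda>x. x /\<^sub>R norm x)"

definition unif_X :: "((real^'n::finite) \<times> (real^'n)) measure" where
  "unif_X = sphere_unif \<Otimes>\<^sub>M sphere_unif"

definition L2_norm_X :: "(((real^'n::finite) \<times> (real^'n)) \<Rightarrow> real) \<Rightarrow> real" where
  "L2_norm_X g = sqrt (integral\<^sup>L unif_X (\<lambda>x. (g x)\<^sup>2))"

end

theory Submission
  imports Defs
begin

lemma prob_sphere_unif: "prob_space (sphere_unif :: (real^'n::finite) measure)"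
  unfolding sphere_unif_def
proof (rule prob_space.prob_space_distr)
  have f: "emeasure lborel (ball (0::real^'n) 1) < \<infinity>" by (rule emeasure_lborel_ball_finite)
  have "measure lborel (ball (0::real^'n) 1) > 0" using content_ball_pos[of 1 "0::real^'n"] by simp
  then have "emeasure lborel (ball (0::real^'n) 1) \<noteq> 0"
    by (metis less_irrefl measure_def enn2real_0)
  then show "prob_space (uniform_measure lborel (ball (0::real^'n) 1))"
    using f by (intro prob_space_uniform_measure) auto
  show "(\<lambda>x::real^'n. x /\<^sub>R norm x) \<in> measurable (uniform_measure lborel (ball 0 1)) borel"
    by simp
qed

lemma sets_sphere_unif: "sets (sphere_unif :: (real^'n::finite) measure) = sets borel"
  unfolding sphere_unif_def by simp

lemma AE_sphere_unif: "AE x in (sphere_unif :: (real^'n::finite) measure). norm x = 1"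
  unfolding sphere_unif_def
proof (subst AE_distr_iff)
  show "(\<lambda>x::real^'n. x /\<^sub>R norm x) \<in> measurable (uniform_measure lborel (ball 0 1)) borel"
    by simp
  show "{x \<in> space borel. norm (x::real^'n) = 1} \<in> sets borel" by measurable
  have "AE x in lborel. (x::real^'n) \<noteq> 0"
    by (rule AE_I'[of "{0}"]) (auto intro: countable_imp_null_set_lborel)
  then show "AE x in uniform_measure lborel (ball 0 1). norm (x /\<^sub>R norm (x::real^'n)) = 1"
    by (intro AE_uniform_measureI) (auto elim!: eventually_mono)
qed

lemma prob_unif_X: "prob_space (unif_X :: ((real^'n::finite) \<times> (real^'n)) measure)"
  unfolding unif_X_def by (intro prob_space_pair prob_sphere_unif)

lemma sets_unif_X: "sets (unif_X :: ((real^'n::finite) \<times> (real^'n)) measure) = sets borel"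
proof -
  have "sets (unif_X :: ((real^'n::finite) \<times> (real^'n)) measure) = sets (borel \<Otimes>\<^sub>M borel)"
    unfolding unif_X_def by (intro sets_pair_measure_cong sets_sphere_unif)
  then show ?thesis by (metis borel_prod)
qed

lemma meas_unif_X: "measurable (unif_X :: ((real^'n::finite) \<times> (real^'n)) measure) borel = borel_measurable borel"
  by (rule measurable_cong_sets[OF sets_unif_X refl])

lemma AE_unif_X: "AE x in (unif_X :: ((real^'n::finite) \<times> (real^'n)) measure). x \<in> X_d"
proof -
  interpret p1: prob_space "sphere_unif :: (real^'n) measure" by (rule prob_sphere_unif)
  interpret pair_sigma_finite "sphere_unif :: (real^'n) measure" "sphere_unif :: (real^'n) measure"
    by unfold_locales
  show ?thesis unfolding unif_X_def X_d_def
  proof (rule AE_pair_measure)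
    have E1: "{x \<in> space (sphere_unif \<Otimes>\<^sub>M sphere_unif). x \<in> sphere (0::real^'n) 1 \<times> sphere (0::real^'n) 1}
       = {x \<in> space (borel \<Otimes>\<^sub>M borel). x \<in> sphere (0::real^'n) 1 \<times> sphere (0::real^'n) 1}"
      by (simp add: space_pair_measure sets_sphere_unif cong: sets_eq_imp_space_eq)
    have E2: "{x \<in> space (borel \<Otimes>\<^sub>M borel). x \<in> sphere (0::real^'n) 1 \<times> sphere (0::real^'n) 1} \<in> sets (borel \<Otimes>\<^sub>M borel)"
    proof -
      have "sphere (0::real^'n) 1 \<times> sphere (0::real^'n) 1 \<in> sets (borel \<Otimes>\<^sub>M borel)"
        by (intro pair_measureI) auto
      moreover have "{x \<in> space (borel \<Otimes>\<^sub>M borel). x \<in> sphere (0::real^'n) 1 \<times> sphere (0::real^'n) 1} = sphere (0::real^'n) 1 \<times> sphere (0::real^'n) 1"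
        by (auto simp: space_pair_measure)
      ultimately show ?thesis by (simp only:)
    qed
    have E3: "sets (sphere_unif \<Otimes>\<^sub>M sphere_unif) = sets (borel \<Otimes>\<^sub>M (borel :: (real^'n) measure))"
      by (rule sets_pair_measure_cong[OF sets_sphere_unif sets_sphere_unif])
    show "{x \<in> space (sphere_unif \<Otimes>\<^sub>M sphere_unif). x \<in> sphere (0::real^'n) 1 \<times> sphere (0::real^'n) 1}
       \<in> sets (sphere_unif \<Otimes>\<^sub>M sphere_unif)"
      unfolding E1 E3 by (rule E2)
    show "AE x in sphere_unif. AE y in sphere_unif. (x, y) \<in> sphere (0::real^'n) 1 \<times> sphere (0::real^'n) 1"
      using AE_sphere_unif by (auto elim!: eventually_mono simp: dist_norm)
  qed
qed

lemma finite_weighted_min: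
  fixes a p :: "nat \<Rightarrow> real"
  assumes "finite K" "\<forall>k\<in>K. p k \<ge> 0" "(\<Sum>k\<in>K. p k) = 1" "(\<Sum>k\<in>K. p k * a k) \<le> V"
  shows "\<exists>k\<in>K. a k \<le> V"
proof -
  have "K \<noteq> {}" using assms(3) by auto
  then have "Min (a ` K) \<in> a ` K" using assms(1) by (intro Min_in) auto
  then obtain k0 where k0K: "k0 \<in> K" and k0e: "a k0 = Min (a ` K)" by auto
  have k0: "k0 \<in> K" "\<forall>k\<in>K. a k0 \<le> a k" using k0K k0e assms(1) by auto
  have "(\<Sum>k\<in>K. p k * a k0) \<le> (\<Sum>k\<in>K. p k * a k)"
    using k0 assms(2) by (intro sum_mono mult_left_mono) auto
  also have "(\<Sum>k\<in>K. p k * a k0) = a k0" using assms(3) by (simp add: sum_distrib_right[symmetric])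
  finally have "a k0 \<le> V" using assms(4) by linarith
  with k0 show ?thesis by blast
qed

lemma sq_le_of_abs: "\<bar>u::real\<bar> \<le> D \<Longrightarrow> u\<^sup>2 \<le> D\<^sup>2"
  by (metis abs_ge_zero order_trans power2_abs power_mono)

lemma pointwise_var:
  fixes p Y :: "nat \<Rightarrow> real"
  assumes "finite K" "\<forall>k\<in>K. p k \<ge> 0" "(\<Sum>k\<in>K. p k) = 1" "F = (\<Sum>k\<in>K. p k * Y k)"
    "\<forall>k\<in>K. (Y k)\<^sup>2 \<le> B"
  shows "(\<Sum>k\<in>K. p k * (U + (F - Y k))\<^sup>2) \<le> U\<^sup>2 + B"
proof -
  have "(\<Sum>k\<in>K. p k * (U + (F - Y k))\<^sup>2) =
      (\<Sum>k\<in>K. p k * (U + F)\<^sup>2 - 2 * (U + F) * (p k * Y k) + p k * (Y k)\<^sup>2)"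
    by (intro sum.cong) (auto simp: power2_eq_square algebra_simps)
  also have "\<dots> = (U + F)\<^sup>2 - 2 * (U + F) * F + (\<Sum>k\<in>K. p k * (Y k)\<^sup>2)"
    using assms(3,4) by (simp add: sum.distrib sum_subtractf sum_distrib_left[symmetric] sum_distrib_right[symmetric])
  finally have E: "(\<Sum>k\<in>K. p k * (U + (F - Y k))\<^sup>2) = (U + F)\<^sup>2 - 2 * (U + F) * F + (\<Sum>k\<in>K. p k * (Y k)\<^sup>2)" .
  have "(\<Sum>k\<in>K. p k * (Y k)\<^sup>2) \<le> (\<Sum>k\<in>K. p k * B)"
    using assms(2,5) by (intro sum_mono mult_left_mono) auto
  also have "(\<Sum>k\<in>K. p k * B) = B" using assms(3) by (simp add: sum_distrib_right[symmetric])
  finally have X: "(\<Sum>k\<in>K. p k * (U + (F - Y k))\<^sup>2) \<le> (U + F)\<^sup>2 - 2 * (U + F) * F + B" using E by linarith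
  have "(U + F)\<^sup>2 - 2 * (U + F) * F = U\<^sup>2 - F\<^sup>2" by (simp add: power2_eq_square algebra_simps)
  with X show ?thesis by (smt (verit) zero_le_power2)
qed

lemma maurey:
  fixes M :: "'a measure" and Y :: "nat \<Rightarrow> 'a \<Rightarrow> real" and p :: "nat \<Rightarrow> real"
  assumes PS: "prob_space M"
    and K: "finite K" and p0: "\<forall>k\<in>K. p k \<ge> 0" and p1: "(\<Sum>k\<in>K. p k) = 1"
    and mY: "\<And>k. k \<in> K \<Longrightarrow> Y k \<in> borel_measurable M" and mF: "F \<in> borel_measurable M"
    and AE: "AE x in M. x \<in> X"
    and FY: "\<forall>x\<in>X. F x = (\<Sum>k\<in>K. p k * Y k x)"
    and YC: "\<forall>x\<in>X. \<forall>k\<in>K. \<bar>Y k x\<bar> \<le> C"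
  shows "\<exists>s. (\<forall>i<m. s i \<in> K) \<and>
     integral\<^sup>L M (\<lambda>x. (real m * F x - (\<Sum>i<m. Y (s i) x))\<^sup>2) \<le> real m * C\<^sup>2"
proof (induction m)
  case 0
  show ?case by simp
next
  case (Suc m)
  interpret prob_space M by (rule PS)
  from Suc obtain s where s: "\<forall>i<m. s i \<in> K"
    and IH: "integral\<^sup>L M (\<lambda>x. (real m * F x - (\<Sum>i<m. Y (s i) x))\<^sup>2) \<le> real m * C\<^sup>2" by blast
  define U where "U = (\<lambda>x. real m * F x - (\<Sum>i<m. Y (s i) x))"
  have C0: "C \<ge> 0" if "x \<in> X" "K \<noteq> {}" for x
    using YC that by force
  have FC: "\<bar>F x\<bar> \<le> C" if "x \<in> X" for x
  proof -
    have "\<bar>F x\<bar> \<le> (\<Sum>k\<in>K. \<bar>p k * Y k x\<bar>)" using FY that by (simp add: sum_abs)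
    also have "\<dots> \<le> (\<Sum>k\<in>K. p k * C)"
      using p0 YC that by (intro sum_mono) (auto simp: abs_mult intro: mult_left_mono)
    also have "\<dots> = C" using p1 by (simp add: sum_distrib_right[symmetric])
    finally show ?thesis .
  qed
  have UC: "\<bar>U x\<bar> \<le> real m * C + real m * C" if "x \<in> X" for x
  proof -
    have "\<bar>U x\<bar> \<le> \<bar>real m * F x\<bar> + \<bar>\<Sum>i<m. Y (s i) x\<bar>" unfolding U_def by (rule abs_triangle_ineq4)
    also have "\<bar>\<Sum>i<m. Y (s i) x\<bar> \<le> (\<Sum>i<m. \<bar>Y (s i) x\<bar>)" by (rule sum_abs)
    also have "\<dots> \<le> (\<Sum>i<m. C)" using s YC that by (intro sum_mono) auto
    also have "\<bar>real m * F x\<bar> \<le> real m * C" using FC[OF that] by (simp add: abs_mult mult_left_mono)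
    finally show ?thesis by simp
  qed
  have mU: "U \<in> borel_measurable M" unfolding U_def using s mY mF by (intro borel_measurable_diff borel_measurable_sum borel_measurable_times borel_measurable_const) auto
  have intU: "integrable M (\<lambda>x. (U x)\<^sup>2)"
  proof (rule integrable_const_bound)
    show "AE x in M. norm ((U x)\<^sup>2) \<le> (real m * C + real m * C)\<^sup>2"
      using AE
    proof (elim eventually_mono)
      fix x assume "x \<in> X"
      then have "(U x)\<^sup>2 \<le> (real m * C + real m * C)\<^sup>2" by (intro sq_le_of_abs UC)
      then show "norm ((U x)\<^sup>2) \<le> (real m * C + real m * C)\<^sup>2" by simp
    qed
  qed (use mU in measurable)
  have intG: "integrable M (\<lambda>x. (U x + (F x - Y k x))\<^sup>2)" if k: "k \<in> K" for k
  proof (rule integrable_const_bound)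
    have bnd: "\<bar>U x + (F x - Y k x)\<bar> \<le> real m * C + real m * C + C + C" if "x \<in> X" for x
      using UC[OF that] FC[OF that] YC that k by (simp add: abs_le_iff) (smt (verit))
    then show "AE x in M. norm ((U x + (F x - Y k x))\<^sup>2) \<le> (real m * C + real m * C + C + C)\<^sup>2"
      using AE
    proof (elim eventually_mono)
      fix x assume "x \<in> X"
      then have "(U x + (F x - Y k x))\<^sup>2 \<le> (real m * C + real m * C + C + C)\<^sup>2" by (intro sq_le_of_abs bnd)
      then show "norm ((U x + (F x - Y k x))\<^sup>2) \<le> (real m * C + real m * C + C + C)\<^sup>2" by simp
    qed
  qed (use mU mF mY[OF k] in measurable)
  have "(\<Sum>k\<in>K. p k * integral\<^sup>L M (\<lambda>x. (U x + (F x - Y k x))\<^sup>2))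
      = integral\<^sup>L M (\<lambda>x. \<Sum>k\<in>K. p k * (U x + (F x - Y k x))\<^sup>2)"
    using intG by (simp add: integral_sum)
  also have "\<dots> \<le> integral\<^sup>L M (\<lambda>x. (U x)\<^sup>2 + C\<^sup>2)"
  proof (rule integral_mono_AE)
    show "integrable M (\<lambda>x. \<Sum>k\<in>K. p k * (U x + (F x - Y k x))\<^sup>2)"
      using intG by auto
    show "integrable M (\<lambda>x. (U x)\<^sup>2 + C\<^sup>2)" using intU by auto
    show "AE x in M. (\<Sum>k\<in>K. p k * (U x + (F x - Y k x))\<^sup>2) \<le> (U x)\<^sup>2 + C\<^sup>2"
      using AE
    proof (elim eventually_mono)
      fix x assume x: "x \<in> X"
      show "(\<Sum>k\<in>K. p k * (U x + (F x - Y k x))\<^sup>2) \<le> (U x)\<^sup>2 + C\<^sup>2"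
        by (rule pointwise_var[OF K p0 p1]) (use FY YC x sq_le_of_abs in \<open>auto\<close>)
    qed
  qed
  also have "\<dots> = integral\<^sup>L M (\<lambda>x. (U x)\<^sup>2) + C\<^sup>2"
    using intU by (simp add: prob_space)
  also have "\<dots> \<le> real (Suc m) * C\<^sup>2" using IH unfolding U_def by (simp add: algebra_simps)
  finally have H: "(\<Sum>k\<in>K. p k * integral\<^sup>L M (\<lambda>x. (U x + (F x - Y k x))\<^sup>2)) \<le> real (Suc m) * C\<^sup>2" .
  obtain k where k: "k \<in> K"
    and kb: "integral\<^sup>L M (\<lambda>x. (U x + (F x - Y k x))\<^sup>2) \<le> real (Suc m) * C\<^sup>2"
    using finite_weighted_min[OF K p0 p1 H] by blast
  define s' where "s' = s(m := k)"
  have "\<forall>i<Suc m. s' i \<in> K" using s k by (auto simp: s'_def less_Suc_eq)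
  moreover have "(\<Sum>i<Suc m. Y (s' i) x) = (\<Sum>i<m. Y (s i) x) + Y k x" for x
    by (simp add: s'_def)
  then have "(\<lambda>x. (real (Suc m) * F x - (\<Sum>i<Suc m. Y (s' i) x))\<^sup>2) = (\<lambda>x. (U x + (F x - Y k x))\<^sup>2)"
    by (simp add: U_def algebra_simps)
  ultimately show ?case using kb by metis
qed

lemma param_sup_le: "(param_sup \<phi>)\<^sup>2 \<le> param_norm2 (\<phi>::('n::finite) net)"
proof -
  define T where "T k = (norm (wts \<phi> k))\<^sup>2 + (bias \<phi> k)\<^sup>2 + (outw \<phi> k)\<^sup>2" for k
  have N: "param_norm2 \<phi> = (\<Sum>k<width \<phi>. T k) + (outb \<phi>)\<^sup>2" unfolding param_norm2_def T_def by simp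
  have T0: "T k \<ge> 0" for k unfolding T_def by simp
  have Tk: "T k \<le> param_norm2 \<phi>" if "k < width \<phi>" for k
  proof -
    have "T k \<le> (\<Sum>k<width \<phi>. T k)" using that T0 by (intro member_le_sum) auto
    then show ?thesis unfolding N using zero_le_power2[of "outb \<phi>"] by linarith
  qed
  have S0: "(\<Sum>k<width \<phi>. T k) \<ge> 0" using T0 by (simp add: sum_nonneg)
  define A where "A = insert \<bar>outb \<phi>\<bar>
     (\<Union>k\<in>{..<width \<phi>}. {\<bar>bias \<phi> k\<bar>, \<bar>outw \<phi> k\<bar>}
        \<union> {\<bar>fst (wts \<phi> k) $ i\<bar> | i. True} \<union> {\<bar>snd (wts \<phi> k) $ i\<bar> | i. True})"
  have fin: "finite A" unfolding A_def by (auto simp: full_SetCompr_eq)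
  have all: "e\<^sup>2 \<le> param_norm2 \<phi>" if "e \<in> A" for e
  proof -
    consider "e = \<bar>outb \<phi>\<bar>" | k where "k < width \<phi>" "e = \<bar>bias \<phi> k\<bar> \<or> e = \<bar>outw \<phi> k\<bar>"
      | k i where "k < width \<phi>" "e = \<bar>fst (wts \<phi> k) $ i\<bar> \<or> e = \<bar>snd (wts \<phi> k) $ i\<bar>"
      using \<open>e \<in> A\<close> unfolding A_def by blast
    then show ?thesis
    proof cases
      case 1 then show ?thesis using S0 N by simp
    next
      case (2 k)
      have "e\<^sup>2 \<le> T k" using 2(2) unfolding T_def by auto
      then show ?thesis using Tk[OF 2(1)] by simp
    next
      case (3 k i)
      have "e \<le> norm (wts \<phi> k)"
        using 3(2) component_le_norm_cart[of "fst (wts \<phi> k)" i] component_le_norm_cart[of "snd (wts \<phi> k)" i]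
          norm_fst_le[of "fst (wts \<phi> k)" "snd (wts \<phi> k)"] norm_snd_le[of "snd (wts \<phi> k)" "fst (wts \<phi> k)"] by auto
      then have "e\<^sup>2 \<le> (norm (wts \<phi> k))\<^sup>2" using 3(2) by (intro power_mono) auto
      also have "\<dots> \<le> T k" unfolding T_def by simp
      finally show ?thesis using Tk[OF 3(1)] by simp
    qed
  qed
  have "Max A \<in> A" using fin by (intro Max_in) (auto simp: A_def)
  then show ?thesis using all unfolding param_sup_def A_def[symmetric] by blast
qed

lemma CS_bound:
  fixes u x :: "(real^'n::finite) \<times> (real^'n)"
  assumes "x \<in> X_d"
  shows "\<bar>u \<bullet> x + \<beta>\<bar> \<le> sqrt ((norm u)\<^sup>2 + \<beta>\<^sup>2) * sqrt 3"
proof -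
  have "\<bar>(u, \<beta>) \<bullet> (x, 1::real)\<bar> \<le> norm (u, \<beta>) * norm (x, 1::real)" by (rule Cauchy_Schwarz_ineq2)
  moreover have "(u, \<beta>) \<bullet> (x, 1::real) = u \<bullet> x + \<beta>" by (simp add: inner_Pair)
  moreover have "norm (u, \<beta>) = sqrt ((norm u)\<^sup>2 + \<beta>\<^sup>2)" by (simp add: norm_Pair)
  moreover have "norm (x, 1::real) = sqrt 3"
  proof -
    obtain x1 x2 where x: "x = (x1, x2)" by fastforce
    have "norm x1 = 1" "norm x2 = 1" using assms unfolding X_d_def x by auto
    then show ?thesis unfolding x by (simp add: norm_Pair)
  qed
  ultimately show ?thesis by simp
qed

lemma relu_hom: assumes "c \<ge> 0" shows "relu (c * t) = c * relu t"
proof (cases "t \<ge> 0")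
  case True
  then show ?thesis using assms unfolding relu_def by simp
next
  case False
  then have "c * t \<le> 0" using assms by (simp add: mult_nonneg_nonpos)
  then show ?thesis using False unfolding relu_def by simp
qed

lemma relu_abs: "\<bar>relu t\<bar> \<le> \<bar>t\<bar>"
  unfolding relu_def by auto

lemma net_cont: "continuous_on UNIV (net_fun (\<phi>::('n::finite) net))"
  unfolding net_fun_def[abs_def] relu_def by (intro continuous_intros)

lemma net_meas: "net_fun (\<phi>::('n::finite) net) \<in> borel_measurable unif_X"
  unfolding meas_unif_X by (rule borel_measurable_continuous_onI[OF net_cont])

lemma L2_zero:
  assumes "\<forall>x\<in>X_d. g x = (0::real)"
  shows "L2_norm_X (g :: ((real^'n::finite) \<times> (real^'n)) \<Rightarrow> real) = 0"
proof -
  have "AE x in (unif_X :: ((real^'n::finite) \<times> (real^'n)) measure). (g x)\<^sup>2 = 0"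
  proof (rule eventually_mono[OF AE_unif_X])
    fix x :: "(real^'n) \<times> (real^'n)" assume "x \<in> X_d" then show "(g x)\<^sup>2 = 0" using assms by simp
  qed
  then show ?thesis unfolding L2_norm_X_def by (simp add: integral_eq_zero_AE)
qed

definition Snet :: "('n::finite) net \<Rightarrow> real" where
  "Snet \<psi> = (\<Sum>k<width \<psi>. \<bar>outw \<psi> k\<bar> * sqrt ((norm (wts \<psi> k))\<^sup>2 + (bias \<psi> k)\<^sup>2))"

lemma Snet_nonneg: "Snet \<psi> \<ge> 0"
  unfolding Snet_def by (intro sum_nonneg) auto

lemma Snet_le: "Snet \<psi> + (outb \<psi>)\<^sup>2 / 2 \<le> param_norm2 \<psi> / 2"
proof -
  have "2 * (\<bar>outw \<psi> k\<bar> * sqrt ((norm (wts \<psi> k))\<^sup>2 + (bias \<psi> k)\<^sup>2))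
     \<le> (norm (wts \<psi> k))\<^sup>2 + (bias \<psi> k)\<^sup>2 + (outw \<psi> k)\<^sup>2" for k
  proof -
    define r where "r = sqrt ((norm (wts \<psi> k))\<^sup>2 + (bias \<psi> k)\<^sup>2)"
    have r2: "r\<^sup>2 = (norm (wts \<psi> k))\<^sup>2 + (bias \<psi> k)\<^sup>2" unfolding r_def by simp
    have "0 \<le> (\<bar>outw \<psi> k\<bar> - r)\<^sup>2" by simp
    then have "2 * (\<bar>outw \<psi> k\<bar> * r) \<le> r\<^sup>2 + (outw \<psi> k)\<^sup>2"
      by (simp add: power2_eq_square algebra_simps)
    then show ?thesis unfolding r2 by (simp add: r_def)
  qed
  then have "2 * Snet \<psi> \<le> (\<Sum>k<width \<psi>. (norm (wts \<psi> k))\<^sup>2 + (bias \<psi> k)\<^sup>2 + (outw \<psi> k)\<^sup>2)"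
    unfolding Snet_def sum_distrib_left by (intro sum_mono) auto
  then show ?thesis unfolding param_norm2_def by simp
qed

lemma net_bound:
  assumes "x \<in> X_d"
  shows "\<bar>net_fun \<psi> x - outb \<psi>\<bar> \<le> sqrt 3 * Snet (\<psi>::('n::finite) net)"
proof -
  have "\<bar>net_fun \<psi> x - outb \<psi>\<bar> = \<bar>\<Sum>k<width \<psi>. outw \<psi> k * relu (wts \<psi> k \<bullet> x + bias \<psi> k)\<bar>"
    unfolding net_fun_def by simp
  also have "\<dots> \<le> (\<Sum>k<width \<psi>. \<bar>outw \<psi> k * relu (wts \<psi> k \<bullet> x + bias \<psi> k)\<bar>)" by (rule sum_abs)
  also have "\<dots> \<le> (\<Sum>k<width \<psi>. sqrt 3 * (\<bar>outw \<psi> k\<bar> * sqrt ((norm (wts \<psi> k))\<^sup>2 + (bias \<psi> k)\<^sup>2)))"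
  proof (intro sum_mono)
    fix k
    have "\<bar>relu (wts \<psi> k \<bullet> x + bias \<psi> k)\<bar> \<le> sqrt ((norm (wts \<psi> k))\<^sup>2 + (bias \<psi> k)\<^sup>2) * sqrt 3"
      using relu_abs CS_bound[OF assms] order_trans by blast
    then show "\<bar>outw \<psi> k * relu (wts \<psi> k \<bullet> x + bias \<psi> k)\<bar>
      \<le> sqrt 3 * (\<bar>outw \<psi> k\<bar> * sqrt ((norm (wts \<psi> k))\<^sup>2 + (bias \<psi> k)\<^sup>2))"
      by (simp add: abs_mult mult_left_mono mult.commute mult.left_commute)
  qed
  also have "\<dots> = sqrt 3 * Snet \<psi>" unfolding Snet_def by (simp add: sum_distrib_left)
  finally show ?thesis .
qed

lemma tt_helper:
  fixes a b t S w :: real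
  assumes "t * t = S / w"
  shows "a * t * (t * b) = a * S * b / w"
proof -
  have "a * t * (t * b) = a * b * (t * t)" by (simp add: algebra_simps)
  then show ?thesis using assms by simp
qed

lemma approx:
  fixes \<psi> \<psi>0 :: "('n::finite) net" and \<omega> :: nat
  assumes agree: "\<forall>x\<in>X_d. net_fun \<psi> x = net_fun \<psi>0 x"
    and Spos: "Snet \<psi> > 0" and om: "\<omega> > 0"
  shows "\<exists>\<phi>::'n net. width \<phi> = \<omega> \<and> param_norm2 \<phi> \<le> 2 * Snet \<psi> + (outb \<psi>)\<^sup>2 \<and>
     L2_norm_X (\<lambda>x. net_fun \<psi>0 x - net_fun \<phi> x) \<le> sqrt (3 * (Snet \<psi>)\<^sup>2 / real \<omega>)"
proof -
  define S where "S = Snet \<psi>"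
  define K where "K = {..<width \<psi>}"
  define r where "r k = sqrt ((norm (wts \<psi> k))\<^sup>2 + (bias \<psi> k)\<^sup>2)" for k
  define p where "p k = \<bar>outw \<psi> k\<bar> * r k / S" for k
  define u where "u k = (1 / r k) *\<^sub>R wts \<psi> k" for k
  define \<beta> where "\<beta> k = bias \<psi> k / r k" for k
  define Y where "Y k x = sgn (outw \<psi> k) * S * relu (u k \<bullet> x + \<beta> k)" for k x
  define F where "F x = net_fun \<psi> x - outb \<psi>" for x
  define C where "C = S * sqrt 3"
  have S_eq: "S = (\<Sum>k\<in>K. \<bar>outw \<psi> k\<bar> * r k)" unfolding S_def Snet_def K_def r_def by simp
  have Sp: "S > 0" using Spos S_def by simp
  have unit: "(norm (u k))\<^sup>2 + (\<beta> k)\<^sup>2 \<le> 1" for k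
  proof (cases "r k = 0")
    case True then show ?thesis by (simp add: u_def \<beta>_def)
  next
    case False
    have "r k \<ge> 0" unfolding r_def by simp
    with False have rp: "r k > 0" by simp
    have "(norm (u k))\<^sup>2 + (\<beta> k)\<^sup>2 = ((norm (wts \<psi> k))\<^sup>2 + (bias \<psi> k)\<^sup>2) / (r k)\<^sup>2"
      using rp by (simp add: u_def \<beta>_def power_divide add_divide_distrib)
    also have "\<dots> = 1"
    proof -
      have r2: "(r k)\<^sup>2 = (norm (wts \<psi> k))\<^sup>2 + (bias \<psi> k)\<^sup>2" unfolding r_def by simp
      have "(r k)\<^sup>2 > 0" using rp by simp
      then have "(norm (wts \<psi> k))\<^sup>2 + (bias \<psi> k)\<^sup>2 \<noteq> 0" unfolding r2 by linarith
      then show ?thesis unfolding r2 by (rule divide_self)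
    qed
    finally show ?thesis by simp
  qed
  have p0: "\<forall>k\<in>K. p k \<ge> 0" using Sp by (auto simp: p_def r_def)
  have p1: "(\<Sum>k\<in>K. p k) = 1" using Sp unfolding p_def S_eq by (simp add: sum_divide_distrib[symmetric])
  have tm: "p k * Y k x = outw \<psi> k * relu (wts \<psi> k \<bullet> x + bias \<psi> k)" for k x
  proof (cases "r k = 0")
    case True
    then have "wts \<psi> k = 0" "bias \<psi> k = 0" unfolding r_def
      by (metis add_nonneg_eq_0_iff norm_eq_zero real_sqrt_eq_zero_cancel_iff zero_eq_power2 zero_le_power2)+
    then show ?thesis using True by (simp add: p_def relu_def)
  next
    case False
    have "r k \<ge> 0" unfolding r_def by simp
    with False have rp: "r k > 0" by simp
    have "u k \<bullet> x + \<beta> k = (1 / r k) * (wts \<psi> k \<bullet> x + bias \<psi> k)"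
      by (simp add: u_def \<beta>_def algebra_simps)
    then have "relu (u k \<bullet> x + \<beta> k) = (1 / r k) * relu (wts \<psi> k \<bullet> x + bias \<psi> k)"
      using rp relu_hom[of "1 / r k" "wts \<psi> k \<bullet> x + bias \<psi> k"] by simp
    then have "p k * Y k x = (\<bar>outw \<psi> k\<bar> * sgn (outw \<psi> k)) * (r k / S * S * (1 / r k)) * relu (wts \<psi> k \<bullet> x + bias \<psi> k)"
      by (simp add: p_def Y_def)
    also have "r k / S * S * (1 / r k) = 1" using rp Sp by simp
    also have "\<bar>outw \<psi> k\<bar> * sgn (outw \<psi> k) = outw \<psi> k" by (simp add: abs_mult_sgn)
    finally show ?thesis by simp
  qed
  have FY: "\<forall>x\<in>X_d. F x = (\<Sum>k\<in>K. p k * Y k x)"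
    unfolding F_def tm K_def net_fun_def by simp
  have YC: "\<forall>x\<in>X_d. \<forall>k\<in>K. \<bar>Y k x\<bar> \<le> C"
  proof (intro ballI)
    fix x :: "(real^'n) \<times> (real^'n)" and k assume x: "x \<in> X_d"
    have "\<bar>u k \<bullet> x + \<beta> k\<bar> \<le> sqrt ((norm (u k))\<^sup>2 + (\<beta> k)\<^sup>2) * sqrt 3" by (rule CS_bound[OF x])
    also have "\<dots> \<le> 1 * sqrt 3" using unit[of k] by (intro mult_right_mono) auto
    finally have "\<bar>relu (u k \<bullet> x + \<beta> k)\<bar> \<le> sqrt 3" using relu_abs by (metis mult_1 order_trans)
    then have "\<bar>sgn (outw \<psi> k)\<bar> * (S * \<bar>relu (u k \<bullet> x + \<beta> k)\<bar>) \<le> 1 * (S * sqrt 3)"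
      using Sp by (intro mult_mono mult_left_mono) (auto simp: abs_sgn_eq)
    then show "\<bar>Y k x\<bar> \<le> C" unfolding Y_def C_def using Sp by (simp add: abs_mult)
  qed
  have contY: "continuous_on UNIV (Y k)" for k unfolding Y_def[abs_def] relu_def by (intro continuous_intros)
  have mY: "Y k \<in> borel_measurable (unif_X :: ((real^'n) \<times> (real^'n)) measure)" for k
    unfolding meas_unif_X by (rule borel_measurable_continuous_onI[OF contY])
  have mF: "F \<in> borel_measurable (unif_X :: ((real^'n) \<times> (real^'n)) measure)"
    unfolding F_def[abs_def] using net_meas by measurable
  obtain s where s: "\<forall>i<\<omega>. s i \<in> K"
    and sb: "integral\<^sup>L (unif_X :: ((real^'n) \<times> (real^'n)) measure) (\<lambda>x. (real \<omega> * F x - (\<Sum>i<\<omega>. Y (s i) x))\<^sup>2) \<le> real \<omega> * C\<^sup>2"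
    using maurey[OF prob_unif_X _ p0 p1 mY mF AE_unif_X FY YC, of \<omega>] unfolding K_def by auto
  define t where "t = sqrt (S / real \<omega>)"
  have t2: "t\<^sup>2 = S / real \<omega>" unfolding t_def using Sp by simp
  have t0: "t \<ge> 0" unfolding t_def using Sp by simp
  have tt: "t * t = S / real \<omega>" using t2 by (simp add: power2_eq_square)
  define \<phi> where "\<phi> = \<lparr>width = \<omega>, wts = (\<lambda>i. t *\<^sub>R u (s i)), bias = (\<lambda>i. t * \<beta> (s i)),
     outw = (\<lambda>i. sgn (outw \<psi> (s i)) * t), outb = outb \<psi>\<rparr>"
  have wd: "width \<phi> = \<omega>" unfolding \<phi>_def by simp
  have nf: "net_fun \<phi> x = (\<Sum>i<\<omega>. Y (s i) x) / real \<omega> + outb \<psi>" for x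
  proof -
    have "net_fun \<phi> x = (\<Sum>i<\<omega>. sgn (outw \<psi> (s i)) * t * relu (t * (u (s i) \<bullet> x + \<beta> (s i)))) + outb \<psi>"
      unfolding \<phi>_def net_fun_def by (simp add: algebra_simps)
    also have "\<dots> = (\<Sum>i<\<omega>. Y (s i) x / real \<omega>) + outb \<psi>"
      by (intro arg_cong2[where f="(+)"] sum.cong refl)
         (simp add: relu_hom[OF t0] Y_def tt_helper[OF tt])
    finally show ?thesis by (simp add: sum_divide_distrib)
  qed
  have norm_le: "param_norm2 \<phi> \<le> 2 * S + (outb \<psi>)\<^sup>2"
  proof -
    have "(\<Sum>k<\<omega>. (norm (t *\<^sub>R u (s k)))\<^sup>2 + (t * \<beta> (s k))\<^sup>2 + (sgn (outw \<psi> (s k)) * t)\<^sup>2)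
        \<le> (\<Sum>k<\<omega>. 2 * (S / real \<omega>))"
    proof (intro sum_mono)
      fix k
      have a: "(norm (t *\<^sub>R u (s k)))\<^sup>2 + (t * \<beta> (s k))\<^sup>2 = t\<^sup>2 * ((norm (u (s k)))\<^sup>2 + (\<beta> (s k))\<^sup>2)"
        using t0 by (simp add: power_mult_distrib algebra_simps)
      have b: "t\<^sup>2 * ((norm (u (s k)))\<^sup>2 + (\<beta> (s k))\<^sup>2) \<le> t\<^sup>2 * 1"
        using unit by (intro mult_left_mono) auto
      have c: "(sgn (outw \<psi> (s k)) * t)\<^sup>2 \<le> t\<^sup>2"
        by (cases "outw \<psi> (s k) = 0") (auto simp: power_mult_distrib sgn_if)
      show "(norm (t *\<^sub>R u (s k)))\<^sup>2 + (t * \<beta> (s k))\<^sup>2 + (sgn (outw \<psi> (s k)) * t)\<^sup>2 \<le> 2 * (S / real \<omega>)"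
        using a b c t2 by linarith
    qed
    also have "\<dots> = 2 * S" using om by simp
    finally show ?thesis unfolding param_norm2_def \<phi>_def by simp
  qed
  have ae: "AE x in (unif_X :: ((real^'n) \<times> (real^'n)) measure).
      (net_fun \<psi>0 x - net_fun \<phi> x)\<^sup>2 = (real \<omega> * F x - (\<Sum>i<\<omega>. Y (s i) x))\<^sup>2 / (real \<omega>)\<^sup>2"
  proof (rule eventually_mono[OF AE_unif_X])
    fix x :: "(real^'n) \<times> (real^'n)" assume x: "x \<in> X_d"
    have "net_fun \<psi>0 x - net_fun \<phi> x = (real \<omega> * F x - (\<Sum>i<\<omega>. Y (s i) x)) / real \<omega>"
      using agree x om unfolding nf F_def by (simp add: field_simps)
    then show "(net_fun \<psi>0 x - net_fun \<phi> x)\<^sup>2 = (real \<omega> * F x - (\<Sum>i<\<omega>. Y (s i) x))\<^sup>2 / (real \<omega>)\<^sup>2"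
      by (simp add: power_divide)
  qed
  have "integral\<^sup>L (unif_X :: ((real^'n) \<times> (real^'n)) measure) (\<lambda>x. (net_fun \<psi>0 x - net_fun \<phi> x)\<^sup>2)
      = integral\<^sup>L unif_X (\<lambda>x. (real \<omega> * F x - (\<Sum>i<\<omega>. Y (s i) x))\<^sup>2 / (real \<omega>)\<^sup>2)"
    by (rule integral_cong_AE[OF _ _ ae]) (use net_meas mY mF in measurable)
  also have "\<dots> = integral\<^sup>L unif_X (\<lambda>x. (real \<omega> * F x - (\<Sum>i<\<omega>. Y (s i) x))\<^sup>2) / (real \<omega>)\<^sup>2"
    by simp
  also have "\<dots> \<le> real \<omega> * C\<^sup>2 / (real \<omega>)\<^sup>2" using sb by (intro divide_right_mono) auto
  also have "\<dots> = 3 * S\<^sup>2 / real \<omega>" using om unfolding C_def by (simp add: power2_eq_square field_simps)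
  finally have "L2_norm_X (\<lambda>x. net_fun \<psi>0 x - net_fun \<phi> x) \<le> sqrt (3 * S\<^sup>2 / real \<omega>)"
    unfolding L2_norm_X_def by simp
  then show ?thesis using wd norm_le unfolding S_def by blast
qed

definition cnet :: "nat \<Rightarrow> real \<Rightarrow> ('n::finite) net" where
  "cnet w c = \<lparr>width = w, wts = (\<lambda>_. 0), bias = (\<lambda>_. 0), outw = (\<lambda>_. 0), outb = c\<rparr>"

lemma cnet_simps: "width (cnet w c) = w" "net_fun (cnet w c) x = c" "param_norm2 (cnet w c) = c\<^sup>2"
  by (simp_all add: cnet_def net_fun_def param_norm2_def)

lemma param_norm2_nonneg: "param_norm2 \<phi> \<ge> 0"
  unfolding param_norm2_def by (intro add_nonneg_nonneg sum_nonneg) auto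

theorem lemma2:
  fixes f :: "((real^'n::finite) \<times> (real^'n)) \<Rightarrow> real"
    and \<epsilon> :: real and \<omega> :: nat
  assumes "CARD('n) \<ge> 2"
    and "f \<in> N2"
    and "\<epsilon> > 0"
    and "real \<omega> > 3 * (R2 f)\<^sup>2 / \<epsilon>\<^sup>2"
  shows "\<exists>\<phi>::'n net. width \<phi> = \<omega> \<and>
           (param_sup \<phi>)\<^sup>2 \<le> param_norm2 \<phi> \<and>
           param_norm2 \<phi> \<le> 4 * R2 f \<and>
           L2_norm_X (\<lambda>x. f x - net_fun \<phi> x) \<le> \<epsilon>"
proof -
  obtain \<psi>0 :: "'n net" where f_eq: "f = net_fun \<psi>0" using assms(2) unfolding N2_def by blast
  define A where "A = {param_norm2 \<phi> / 2 | \<phi>::'n net. \<forall>x\<in>X_d. net_fun \<phi> x = f x}"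
  have R: "R2 f = Inf A" unfolding R2_def A_def by simp
  have Ane: "A \<noteq> {}" unfolding A_def f_eq by blast
  have A0: "\<forall>a\<in>A. a \<ge> 0"
  proof
    fix a assume "a \<in> A"
    then obtain \<phi> :: "'n net" where "a = param_norm2 \<phi> / 2" unfolding A_def by blast
    then show "a \<ge> 0" using param_norm2_nonneg[of \<phi>] by simp
  qed
  have R0: "R2 f \<ge> 0" unfolding R using Ane A0 by (intro cInf_greatest) auto
  have near: "\<exists>\<psi>::'n net. (\<forall>x\<in>X_d. net_fun \<psi> x = f x) \<and> param_norm2 \<psi> / 2 < R2 f + \<delta>"
    if "\<delta> > 0" for \<delta>
  proof -
    have "Inf A < R2 f + \<delta>" using that R by simp
    then obtain a where "a \<in> A" "a < R2 f + \<delta>" using cInf_lessD[OF Ane] by blast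
    then show ?thesis unfolding A_def by blast
  qed
  have e2: "\<epsilon>\<^sup>2 > 0" using assms(3) by simp
  have om: "\<omega> > 0"
  proof -
    have "3 * (R2 f)\<^sup>2 / \<epsilon>\<^sup>2 \<ge> 0" using e2 by simp
    then show ?thesis using assms(4) by linarith
  qed
  show ?thesis
  proof (cases "R2 f = 0")
    case True
    have fz: "f x = 0" if x: "x \<in> X_d" for x
    proof (rule ccontr)
      assume "f x \<noteq> 0"
      define v where "v = \<bar>f x\<bar>"
      have v0: "v\<^sup>2 > 0" using \<open>f x \<noteq> 0\<close> unfolding v_def by simp
      define \<delta> where "\<delta> = min 1 (v\<^sup>2 / 20)"
      have d0: "\<delta> > 0" unfolding \<delta>_def using v0 by simp
      obtain \<psi> :: "'n net" where ag: "\<forall>x\<in>X_d. net_fun \<psi> x = f x" and P: "param_norm2 \<psi> / 2 < \<delta>"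
        using near[OF d0] True by auto
      have SL: "Snet \<psi> + (outb \<psi>)\<^sup>2 / 2 \<le> param_norm2 \<psi> / 2" by (rule Snet_le)
      have S0: "Snet \<psi> \<ge> 0" by (rule Snet_nonneg)
      have "v \<le> \<bar>net_fun \<psi> x - outb \<psi>\<bar> + \<bar>outb \<psi>\<bar>" unfolding v_def using ag x by auto
      also have "\<dots> \<le> sqrt 3 * Snet \<psi> + \<bar>outb \<psi>\<bar>" using net_bound[OF x, of \<psi>] by simp
      finally have "v\<^sup>2 \<le> (sqrt 3 * Snet \<psi> + \<bar>outb \<psi>\<bar>)\<^sup>2"
        using v0 by (intro power_mono) (auto simp: v_def)
      also have "\<dots> \<le> 2 * (3 * (Snet \<psi>)\<^sup>2 + (outb \<psi>)\<^sup>2)"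
      proof -
        have "0 \<le> (sqrt 3 * Snet \<psi> - \<bar>outb \<psi>\<bar>)\<^sup>2" by simp
        then show ?thesis by (simp add: power2_eq_square algebra_simps)
      qed
      also have "(Snet \<psi>)\<^sup>2 \<le> \<delta>"
      proof -
        have "Snet \<psi> < \<delta>" using SL P zero_le_power2[of "outb \<psi>"] by linarith
        have "\<delta> \<le> 1" unfolding \<delta>_def by simp
        then have "Snet \<psi> \<le> 1" using \<open>Snet \<psi> < \<delta>\<close> by linarith
        then have "Snet \<psi> * Snet \<psi> \<le> 1 * Snet \<psi>" using S0 by (rule mult_right_mono)
        then show ?thesis using \<open>Snet \<psi> < \<delta>\<close> by (simp add: power2_eq_square)
      qed
      also have "(outb \<psi>)\<^sup>2 \<le> 2 * \<delta>" using SL P S0 by linarith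
      finally have "v\<^sup>2 \<le> 10 * \<delta>" by simp
      moreover have "10 * \<delta> \<le> v\<^sup>2 / 2" unfolding \<delta>_def by simp
      ultimately show False using v0 by simp
    qed
    define \<phi> where "\<phi> = (cnet \<omega> 0 :: 'n net)"
    have "L2_norm_X (\<lambda>x. f x - net_fun \<phi> x) = 0"
      by (rule L2_zero) (simp add: \<phi>_def cnet_simps fz)
    then show ?thesis using True param_sup_le[of \<phi>] assms(3)
      by (intro exI[of _ \<phi>]) (simp add: \<phi>_def cnet_simps)
  next
    case False
    then have Rp: "R2 f > 0" using R0 by simp
    have lt: "(R2 f)\<^sup>2 < real \<omega> * \<epsilon>\<^sup>2 / 3"
      using assms(4) e2 by (simp add: field_simps)
    then have sq: "R2 f < sqrt (real \<omega> * \<epsilon>\<^sup>2 / 3)" by (rule real_less_rsqrt)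
    define \<delta> where "\<delta> = min (R2 f) (sqrt (real \<omega> * \<epsilon>\<^sup>2 / 3) - R2 f)"
    have d0: "\<delta> > 0" unfolding \<delta>_def using Rp sq by simp
    obtain \<psi> :: "'n net" where ag: "\<forall>x\<in>X_d. net_fun \<psi> x = f x" and P: "param_norm2 \<psi> / 2 < R2 f + \<delta>"
      using near[OF d0] by auto
    have SL: "Snet \<psi> + (outb \<psi>)\<^sup>2 / 2 \<le> param_norm2 \<psi> / 2" by (rule Snet_le)
    have S0: "Snet \<psi> \<ge> 0" by (rule Snet_nonneg)
    have dR: "\<delta> \<le> R2 f" "R2 f + \<delta> \<le> sqrt (real \<omega> * \<epsilon>\<^sup>2 / 3)" unfolding \<delta>_def by auto
    show ?thesis
    proof (cases "Snet \<psi> = 0")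
      case True
      have fc: "f x = outb \<psi>" if x: "x \<in> X_d" for x
        using net_bound[OF x, of \<psi>] True ag x by simp
      define \<phi> where "\<phi> = (cnet \<omega> (outb \<psi>) :: 'n net)"
      have "L2_norm_X (\<lambda>x. f x - net_fun \<phi> x) = 0"
        by (rule L2_zero) (simp add: \<phi>_def cnet_simps fc)
      moreover have "param_norm2 \<phi> \<le> 4 * R2 f" unfolding \<phi>_def cnet_simps using SL P dR S0 by linarith
      ultimately show ?thesis using param_sup_le[of \<phi>] assms(3)
        by (intro exI[of _ \<phi>]) (simp add: \<phi>_def cnet_simps)
    next
      case False
      then have Sp: "Snet \<psi> > 0" using S0 by simp
      have ag0: "\<forall>x\<in>X_d. net_fun \<psi> x = net_fun \<psi>0 x" using ag f_eq by simp
      obtain \<phi> :: "'n net" where w: "width \<phi> = \<omega>" and nb: "param_norm2 \<phi> \<le> 2 * Snet \<psi> + (outb \<psi>)\<^sup>2"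
        and eb: "L2_norm_X (\<lambda>x. net_fun \<psi>0 x - net_fun \<phi> x) \<le> sqrt (3 * (Snet \<psi>)\<^sup>2 / real \<omega>)"
        using approx[OF ag0 Sp om] by blast
      have "Snet \<psi> < sqrt (real \<omega> * \<epsilon>\<^sup>2 / 3)" using SL P dR S0 zero_le_power2[of "outb \<psi>"] by linarith
      then have "(Snet \<psi>)\<^sup>2 < (sqrt (real \<omega> * \<epsilon>\<^sup>2 / 3))\<^sup>2"
        using S0 by (intro power_strict_mono) auto
      then have "(Snet \<psi>)\<^sup>2 < real \<omega> * \<epsilon>\<^sup>2 / 3" by simp
      then have "3 * (Snet \<psi>)\<^sup>2 / real \<omega> < \<epsilon>\<^sup>2" using om by (simp add: field_simps)
      then have "sqrt (3 * (Snet \<psi>)\<^sup>2 / real \<omega>) < \<epsilon>"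
        using assms(3) by (metis real_sqrt_abs abs_of_pos real_sqrt_less_iff)
      then have "L2_norm_X (\<lambda>x. f x - net_fun \<phi> x) \<le> \<epsilon>" using eb f_eq by simp
      moreover have "param_norm2 \<phi> \<le> 4 * R2 f" using nb SL P dR by linarith
      ultimately show ?thesis using w param_sup_le[of \<phi>] by blast
    qed
  qed
qed

end
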